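(* Assume conditions (C1) and (C2) stated in the context. Then there exists a constant $\varepsilon^{\mathcal P}_{\mathrm{iso}}>0$ such that for every $p,q\in\mathcal P$, \[ \mathcal G_p(R_q)\in\{0\}\cup[\varepsilon^{\mathcal P}_{\mathrm{iso}},\infty). \]
   Context: $\mathcal X$ is a measurable space with probability distribution $d_0$; $\mathcal A$ is a separable metric space; $\pi_0$ is a Markov kernel $\mathcal X\to\Delta(\mathcal A)$ with topological supports $S_x:=\mathrm{supp}(\pi_0(\cdot\mid x))$; $\|f\|_{\infty,\mathrm{supp}(\pi_0)}:=\sup\{|f(x,a)|:x\in\mathcal X,a\in S_x\}$. A fixed measurable tie-breaking rule assigns to each measurable reward $R:\mathcal X\times\mathcal A\to\mathbb R$ a measurable map $a_R$ with $a_R(x)\in\arg\max_{a\in S_x}R(x,a)$. $\mathcal P$ is a set; each $p\in\mathcal P$ induces a $\pi_0$-centered (i.e. $\int R_p(x,a)\pi_0(da\mid x)=0$ for all $x$) measurable reward $R_p$; $\mathcal F_{\mathcal P}:=\{R_p:p\in\mathcal P\}$, $a_p:=a_{R_p}$. (C1) $\mathcal F_{\mathcal P}$ is compact under $\|\cdot\|_{\infty,\mathrm{supp}(\pi_0)}$, and for every $R\in\mathcal F_{\mathcal P}$, $a\mapsto R(x,a)$ is continuous on $S_x$ for $d_0$-a.e. $x$. (C2) There is $\Delta^{\mathcal P}_{\min}>0$ such that for every $p\in\mathcal P$, $d_0$-a.s. in $X$, $a_p(X)$ is the unique maximizer and $R_p(X,a_p(X))-\sup_{a\in S_X,a\neq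 a_p(X)}R_p(X,a)\ge\Delta^{\mathcal P}_{\min}$. Temperature-zero regret: $\mathcal G_p(R):=\mathbb E_{X\sim d_0}[R_p(X,a_p(X))-R_p(X,a_R(X))]$. *)

theory Defs
  imports "HOL-Probability.Probability"
begin

definition tsupp :: "'a::topological_space measure \<Rightarrow> 'a set" where
  "tsupp M = {a. \<forall>U. open U \<and> a \<in> U \<longrightarrow> emeasure M U > 0}"

definition supp_dist :: "'x measure \<Rightarrow> ('x \<Rightarrow> 'a set) \<Rightarrow> ('x \<Rightarrow> 'a \<Rightarrow> real)
    \<Rightarrow> ('x \<Rightarrow> 'a \<Rightarrow> real) \<Rightarrow> ereal" where
  "supp_dist d0 S f g = (SUP x\<in>space d0. SUP a\<in>S x. ereal \<bar>f x a - g x a\<bar>)"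

text \<open>Compactness of a family of functions for the (pseudo)metric supp_dist,
  in its (equivalent for pseudometric spaces) sequential form.\<close>
definition supp_compact :: "'x measure \<Rightarrow> ('x \<Rightarrow> 'a set) \<Rightarrow> ('x \<Rightarrow> 'a \<Rightarrow> real) set \<Rightarrow> bool" where
  "supp_compact d0 S F \<longleftrightarrow>
     (\<forall>r. (\<forall>n. r n \<in> F) \<longrightarrow>
        (\<exists>l\<in>F. \<exists>\<sigma>::nat\<Rightarrow>nat. strict_mono \<sigma> \<and>
            (\<lambda>n. supp_dist d0 S (r (\<sigma> n)) l) \<longlonglongrightarrow> 0))"

text \<open>Temperature-zero regret G_p(R) with tie-breaking rule tb.\<close>
definition regret :: "'x measure \<Rightarrow> (('x \<Rightarrow> 'a \<Rightarrow> real) \<Rightarrow> 'x \<Rightarrow> 'a)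
    \<Rightarrow> ('x \<Rightarrow> 'a \<Rightarrow> real) \<Rightarrow> ('x \<Rightarrow> 'a \<Rightarrow> real) \<Rightarrow> real" where
  "regret d0 tb Rp R = (\<integral>x. Rp x (tb Rp x) - Rp x (tb R x) \<partial>d0)"

end

theory Submission
  imports Defs
begin

theorem lemma1:
  fixes d0 :: "'x measure"
    and \<pi>0 :: "'x \<Rightarrow> 'a::{metric_space, second_countable_topology} measure"
    and tb :: "('x \<Rightarrow> 'a \<Rightarrow> real) \<Rightarrow> 'x \<Rightarrow> 'a"
    and P :: "'p set"
    and R :: "'p \<Rightarrow> 'x \<Rightarrow> 'a \<Rightarrow> real"
  assumes d0_prob: "prob_space d0"
    and kernel: "\<pi>0 \<in> d0 \<rightarrow>\<^sub>M prob_algebra borel"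
    and R_meas: "\<And>p. p \<in> P \<Longrightarrow> (\<lambda>(x, a). R p x a) \<in> borel_measurable (d0 \<Otimes>\<^sub>M borel)"
    and R_centered: "\<And>p x. p \<in> P \<Longrightarrow> x \<in> space d0 \<Longrightarrow> (\<integral>a. R p x a \<partial>\<pi>0 x) = 0"
    and tb_meas: "\<And>Rf. Rf \<in> borel_measurable (d0 \<Otimes>\<^sub>M borel) \<Longrightarrow> tb (\<lambda>x a. Rf (x, a)) \<in> d0 \<rightarrow>\<^sub>M borel"
    and tb_argmax: "\<And>p x. p \<in> P \<Longrightarrow> x \<in> space d0 \<Longrightarrow>
        tb (R p) x \<in> tsupp (\<pi>0 x) \<and> (\<forall>a\<in>tsupp (\<pi>0 x). R p x a \<le> R p x (tb (R p) x))"
    and C1_compact: "supp_compact d0 (\<lambda>x. tsupp (\<pi>0 x)) (R ` P)"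
    and C1_cont: "\<And>p. p \<in> P \<Longrightarrow> AE x in d0. continuous_on (tsupp (\<pi>0 x)) (R p x)"
    and C2: "\<exists>\<Delta>>0. \<forall>p\<in>P. AE x in d0. \<forall>a\<in>tsupp (\<pi>0 x).
        a \<noteq> tb (R p) x \<longrightarrow> R p x a \<le> R p x (tb (R p) x) - \<Delta>"
  shows "\<exists>\<epsilon>>0. \<forall>p\<in>P. \<forall>q\<in>P.
           regret d0 tb (R p) (R q) = 0 \<or> regret d0 tb (R p) (R q) \<ge> \<epsilon>"
proof -
  interpret prob_space d0 by (rule d0_prob)
  obtain \<Delta> where \<Delta>pos: "\<Delta> > 0" and \<Delta>: "\<forall>p\<in>P. AE x in d0. \<forall>a\<in>tsupp (\<pi>0 x).
        a \<noteq> tb (R p) x \<longrightarrow> R p x a \<le> R p x (tb (R p) x) - \<Delta>" using C2 by blast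
  define D where "D p q = {x\<in>space d0. tb (R p) x \<noteq> tb (R q) x}" for p q
  define f where "f p q x = R p x (tb (R p) x) - R p x (tb (R q) x)" for p q x
  have reg: "regret d0 tb (R p) (R q) = integral\<^sup>L d0 (f p q)" for p q
    unfolding regret_def f_def by simp
  have tbm: "tb (R p) \<in> borel_measurable d0" if "p \<in> P" for p
    using tb_meas[OF R_meas[OF that]] by simp
  have Dsets: "D p q \<in> sets d0" if "p \<in> P" "q \<in> P" for p q
  proof -
    have "(\<lambda>x. dist (tb (R p) x) (tb (R q) x)) \<in> borel_measurable d0"
      using tbm[OF that(1)] tbm[OF that(2)] by measurable
    then have "{x\<in>space d0. dist (tb (R p) x) (tb (R q) x) \<noteq> 0} \<in> sets d0" by measurable
    then show ?thesis unfolding D_def by simp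
  qed
  have fm: "f p q \<in> borel_measurable d0" if "p \<in> P" "q \<in> P" for p q
  proof -
    have "(\<lambda>x. R p x (tb (R p) x)) \<in> borel_measurable d0"
      by (rule measurable_Pair_compose_split[OF R_meas[OF that(1)] measurable_ident_sets[OF refl] tbm[OF that(1)]])
    moreover have "(\<lambda>x. R p x (tb (R q) x)) \<in> borel_measurable d0"
      by (rule measurable_Pair_compose_split[OF R_meas[OF that(1)] measurable_ident_sets[OF refl] tbm[OF that(2)]])
    ultimately show ?thesis unfolding f_def by measurable
  qed
  have fAE: "AE x in d0. (x \<in> D p q \<longrightarrow> f p q x \<ge> \<Delta>) \<and> (x \<notin> D p q \<longrightarrow> f p q x = 0)"
    if "p \<in> P" "q \<in> P" for p q
    using \<Delta>[rule_format, OF that(1)] AE_space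
  proof eventually_elim
    case (elim x)
    show ?case
    proof (cases "x \<in> space d0")
      case True
      then have "tb (R q) x \<in> tsupp (\<pi>0 x)" using tb_argmax[OF that(2) True] by blast
      then show ?thesis using elim True unfolding D_def f_def by auto
    next
      case False
      then show ?thesis using elim by simp
    qed
  qed
  have L: "regret d0 tb (R p) (R q) = 0 \<or> regret d0 tb (R p) (R q) \<ge> \<Delta> * measure d0 (D p q)"
    if "p \<in> P" "q \<in> P" for p q
  proof (cases "integrable d0 (f p q)")
    case True
    have ii: "integrable d0 (indicat_real (D p q))"
      using Dsets[OF that] by (intro integrable_real_indicator) (auto simp: emeasure_eq_measure)
    have "\<Delta> * measure d0 (D p q) = integral\<^sup>L d0 (\<lambda>x. \<Delta> * indicator (D p q) x)"
      using Dsets[OF that] ii by simp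
    also have "\<dots> \<le> integral\<^sup>L d0 (f p q)"
    proof (rule integral_mono_AE)
      show "integrable d0 (\<lambda>x. \<Delta> * indicator (D p q) x)"
        using ii by simp
      show "integrable d0 (f p q)" by (rule True)
      show "AE x in d0. \<Delta> * indicator (D p q) x \<le> f p q x"
        using fAE[OF that] by eventually_elim (auto simp: indicator_def)
    qed
    finally show ?thesis using reg by simp
  next
    case False
    then show ?thesis using reg by (simp add: not_integrable_integral_eq)
  qed
  have L0: "regret d0 tb (R p) (R q) = 0"
    if "p \<in> P" "q \<in> P" "measure d0 (D p q) = 0" for p q
  proof -
    have "D p q \<in> null_sets d0" using that Dsets[OF that(1,2)]
      by (simp add: null_sets_def emeasure_eq_measure)
    then have "AE x in d0. x \<notin> D p q" by (rule AE_not_in)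
    then have "AE x in d0. f p q x = 0" using fAE[OF that(1,2)] by eventually_elim auto
    then show ?thesis using reg integral_eq_zero_AE by metis
  qed
  have K: "AE x in d0. tb (R p') x = tb (R p) x"
    if "p \<in> P" "p' \<in> P" and sd: "supp_dist d0 (\<lambda>x. tsupp (\<pi>0 x)) (R p') (R p) < ereal (\<Delta>/2)" for p p'
    using \<Delta>[rule_format, OF that(1)] AE_space
  proof eventually_elim
    case (elim x)
    show ?case
    proof (cases "x \<in> space d0")
      case True
      have close: "\<bar>R p' x a - R p x a\<bar> < \<Delta>/2" if a: "a \<in> tsupp (\<pi>0 x)" for a
      proof -
        have "ereal \<bar>R p' x a - R p x a\<bar> \<le> (SUP a\<in>tsupp (\<pi>0 x). ereal \<bar>R p' x a - R p x a\<bar>)"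
          using a by (rule SUP_upper)
        also have "\<dots> \<le> supp_dist d0 (\<lambda>x. tsupp (\<pi>0 x)) (R p') (R p)"
          unfolding supp_dist_def using True by (rule SUP_upper)
        finally have "ereal \<bar>R p' x a - R p x a\<bar> < ereal (\<Delta>/2)" using sd by (rule le_less_trans)
        then show ?thesis by simp
      qed
      define a where "a = tb (R p) x"
      define b where "b = tb (R p') x"
      have a: "a \<in> tsupp (\<pi>0 x)" and b: "b \<in> tsupp (\<pi>0 x)"
        using tb_argmax[OF \<open>p \<in> P\<close> True] tb_argmax[OF \<open>p' \<in> P\<close> True] unfolding a_def b_def by auto
      have bmax: "R p' x a \<le> R p' x b"
        using tb_argmax[OF \<open>p' \<in> P\<close> True] a unfolding b_def by auto
      show ?thesis
      proof (rule ccontr)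
        assume "tb (R p') x \<noteq> tb (R p) x"
        then have "b \<noteq> a" unfolding a_def b_def .
        then have "R p x b \<le> R p x a - \<Delta>" using elim b unfolding a_def by auto
        moreover have "\<bar>R p' x a - R p x a\<bar> < \<Delta>/2" by (rule close[OF a])
        moreover have "\<bar>R p' x b - R p x b\<bar> < \<Delta>/2" by (rule close[OF b])
        ultimately show False using bmax by linarith
      qed
    next
      case False
      then show ?thesis using elim by simp
    qed
  qed
  show ?thesis
  proof (rule ccontr)
    assume neg: "\<not> ?thesis"
    have "\<forall>n. \<exists>p\<in>P. \<exists>q\<in>P. regret d0 tb (R p) (R q) \<noteq> 0 \<and> regret d0 tb (R p) (R q) < 1 / real (Suc n)"
    proof
      fix n :: nat
      have "(1::real) / real (Suc n) > 0" by simp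
      then show "\<exists>p\<in>P. \<exists>q\<in>P. regret d0 tb (R p) (R q) \<noteq> 0 \<and> regret d0 tb (R p) (R q) < 1 / real (Suc n)"
        using neg by (meson not_le)
    qed
    then obtain ps qs where ps: "\<And>n. ps n \<in> P" "\<And>n. qs n \<in> P"
      "\<And>n. regret d0 tb (R (ps n)) (R (qs n)) \<noteq> 0"
      "\<And>n. regret d0 tb (R (ps n)) (R (qs n)) < 1 / real (Suc n)" by metis
    have "\<exists>l\<in>R ` P. \<exists>\<sigma>::nat\<Rightarrow>nat. strict_mono \<sigma> \<and>
            (\<lambda>n. supp_dist d0 (\<lambda>x. tsupp (\<pi>0 x)) (R (ps (\<sigma> n))) l) \<longlonglongrightarrow> 0"
      using C1_compact unfolding supp_compact_def
      by (rule allE[where x="\<lambda>n. R (ps n)"]) (use ps in auto)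
    then obtain p0 \<sigma> where p0: "p0 \<in> P" "strict_mono \<sigma>"
      "(\<lambda>n. supp_dist d0 (\<lambda>x. tsupp (\<pi>0 x)) (R (ps (\<sigma> n))) (R p0)) \<longlonglongrightarrow> 0" by blast
    have "\<exists>l\<in>R ` P. \<exists>\<sigma>'::nat\<Rightarrow>nat. strict_mono \<sigma>' \<and>
            (\<lambda>n. supp_dist d0 (\<lambda>x. tsupp (\<pi>0 x)) (R (qs (\<sigma> (\<sigma>' n)))) l) \<longlonglongrightarrow> 0"
      using C1_compact unfolding supp_compact_def
      by (rule allE[where x="\<lambda>n. R (qs (\<sigma> n))"]) (use ps in auto)
    then obtain q0 \<sigma>' where q0: "q0 \<in> P" "strict_mono \<sigma>'"
      "(\<lambda>n. supp_dist d0 (\<lambda>x. tsupp (\<pi>0 x)) (R (qs (\<sigma> (\<sigma>' n)))) (R q0)) \<longlonglongrightarrow> 0" by blast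
    define \<tau> where "\<tau> = \<sigma> \<circ> \<sigma>'"
    have \<tau>mono: "strict_mono \<tau>" unfolding \<tau>_def using p0(2) q0(2) by (rule strict_mono_o)
    have t1: "(\<lambda>n. supp_dist d0 (\<lambda>x. tsupp (\<pi>0 x)) (R (ps (\<tau> n))) (R p0)) \<longlonglongrightarrow> 0"
      using LIMSEQ_subseq_LIMSEQ[OF p0(3) q0(2)] by (simp add: \<tau>_def o_def)
    have t2: "(\<lambda>n. supp_dist d0 (\<lambda>x. tsupp (\<pi>0 x)) (R (qs (\<tau> n))) (R q0)) \<longlonglongrightarrow> 0"
      using q0(3) by (simp add: \<tau>_def o_def)
    have "0 < ereal (\<Delta>/2)" using \<Delta>pos by simp
    from order_tendstoD(2)[OF t1 this] order_tendstoD(2)[OF t2 this]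
    have "eventually (\<lambda>n. supp_dist d0 (\<lambda>x. tsupp (\<pi>0 x)) (R (ps (\<tau> n))) (R p0) < ereal (\<Delta>/2) \<and>
        supp_dist d0 (\<lambda>x. tsupp (\<pi>0 x)) (R (qs (\<tau> n))) (R q0) < ereal (\<Delta>/2)) sequentially"
      by (rule eventually_conj)
    then obtain N where N: "\<And>n. n \<ge> N \<Longrightarrow>
        supp_dist d0 (\<lambda>x. tsupp (\<pi>0 x)) (R (ps (\<tau> n))) (R p0) < ereal (\<Delta>/2) \<and>
        supp_dist d0 (\<lambda>x. tsupp (\<pi>0 x)) (R (qs (\<tau> n))) (R q0) < ereal (\<Delta>/2)"
      unfolding eventually_sequentially by blast
    have main: "regret d0 tb (R (ps (\<tau> n))) (R (qs (\<tau> n))) \<ge> \<Delta> * measure d0 (D p0 q0)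
        \<and> measure d0 (D p0 q0) > 0" if n: "n \<ge> N" for n
    proof -
      define p where "p = ps (\<tau> n)"
      define q where "q = qs (\<tau> n)"
      have pq: "p \<in> P" "q \<in> P" unfolding p_def q_def using ps by auto
      have a1: "AE x in d0. tb (R p) x = tb (R p0) x"
        by (rule K[OF p0(1) pq(1)]) (use N[OF n] in \<open>simp add: p_def\<close>)
      have a2: "AE x in d0. tb (R q) x = tb (R q0) x"
        by (rule K[OF q0(1) pq(2)]) (use N[OF n] in \<open>simp add: q_def\<close>)
      have "AE x in d0. x \<in> D p q \<longleftrightarrow> x \<in> D p0 q0"
        using a1 a2 by eventually_elim (auto simp: D_def)
      then have meq: "measure d0 (D p q) = measure d0 (D p0 q0)"
        by (rule measure_eq_AE) (use Dsets pq p0(1) q0(1) in auto)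
      have rne: "regret d0 tb (R p) (R q) \<noteq> 0" using ps(3) unfolding p_def q_def by blast
      then have "measure d0 (D p q) \<noteq> 0" using L0[OF pq] by blast
      then have "measure d0 (D p q) > 0" using measure_nonneg[of d0 "D p q"] by linarith
      moreover have "regret d0 tb (R p) (R q) \<ge> \<Delta> * measure d0 (D p q)" using L[OF pq] rne by blast
      ultimately show ?thesis using meq unfolding p_def q_def by simp
    qed
    define c where "c = \<Delta> * measure d0 (D p0 q0)"
    have cpos: "c > 0" unfolding c_def using main[of N] \<Delta>pos by simp
    obtain k :: nat where k: "1 / c < real k" using reals_Archimedean2 by blast
    define m where "m = max N k"
    have "1 / c < real (Suc m)" using k unfolding m_def by simp
    then have m1: "1 / real (Suc m) < c" using cpos
      by (metis divide_less_eq mult.commute of_nat_0_less_iff zero_less_Suc)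
    have "m \<le> \<tau> m" using seq_suble[OF \<tau>mono] .
    then have "1 / real (Suc (\<tau> m)) \<le> 1 / real (Suc m)"
      by (simp add: frac_le)
    moreover have "regret d0 tb (R (ps (\<tau> m))) (R (qs (\<tau> m))) < 1 / real (Suc (\<tau> m))" by (rule ps(4))
    moreover have "regret d0 tb (R (ps (\<tau> m))) (R (qs (\<tau> m))) \<ge> c"
      using main[of m] unfolding c_def m_def by simp
    ultimately show False using m1 by linarith
  qed
qed

end
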